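(* Let $(C^\bullet,d,d^* )$ be a $\mathbb{Z}_2$-graded bi-graded complex of finite-dimensional ${\bf k}$-vector spaces and suppose that the combinatorial Laplacian $\Delta=d^*d+dd^*$ has no zero eigenvalue. Then $H^\bullet(d)=0$ and $H_\bullet(d^* )=0$. Moreover, $d^*d$ maps $C_+^{\bar k}$ isomorphically onto itself for $k=0,1$, and (identifying $\operatorname{Det}(H^\bullet(d))\otimes\operatorname{Det}(H_\bullet(d^* ))^{-1}={\bf k}$) $$\tau(C^\bullet,d,d^* )=\operatorname{Det}\big(d^*d|_{C_+^{\bar 0}}\big)\cdot\operatorname{Det}\big(d^*d|_{C_+^{\bar 1}}\big)^{-1}.$$
   Context: ${\bf k}$ is a field of characteristic zero; bars on integers denote residues mod 2. A $\mathbb{Z}_2$-graded bi-graded complex $(C^\bullet,d,d^* )$ consists of finite-dimensional ${\bf k}$-vector spaces $C^{\bar 0},C^{\bar 1}$ and linear maps $d:C^{\bar k}\to C^{\overline{k+1}}$, $d^*:C^{\bar k}\to C^{\overline{k-1}}$ with $d^2=0$, $(d^* )^2=0$ ($d^*$ is not assumed to be an adjoint of $d$). $H^{\bar k}(d)$ is the cohomology of $(C^\bullet,d)$ and $H_{\bar k}(d^* )$ the homology of $(C^\bullet,d^* )$. For a finite-dimensional space $V$ of dimension $n$, $\operatorname{Det}(V)=\wedge^nV$ ($\operatorname{Det}(0)={\bf k}$), $\operatorname{Det}(V)^{-1}$ is its dual line; $\operatorname{Det}(C^\bullet)=\operatorname{Det}(C^{\bar0})\otimes\operatorname{Det}(C^{\bar1})^{-1}$,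 and similarly $\operatorname{Det}(H^\bullet(d))$, $\operatorname{Det}(H_\bullet(d^* ))$. For spaces $V_1,\dots,V_r$, $\mu_{V_1,\dots,V_r}:\operatorname{Det}V_1\otimes\cdots\otimes\operatorname{Det}V_r\to\operatorname{Det}(V_1\oplus\cdots\oplus V_r)$ is the fusion isomorphism $v_1\otimes\cdots\otimes v_r\mapsto v_1\wedge\cdots\wedge v_r$. Torsion: for $k=0,1$ choose decompositions $C^{\bar k}=B^{\bar k}\oplus H^{\bar k}\oplus A^{\bar k}$ with $B^{\bar k}\oplus H^{\bar k}=\operatorname{Ker}d\cap C^{\bar k}$, $B^{\bar k}=d(C^{\overline{k-1}})=d(A^{\overline{k-1}})$, and $C^{\bar k}=B_{\bar k}\oplus H_{\bar k}\oplus A_{\bar k}$ with $B_{\bar k}\oplus H_{\bar k}=\operatorname{Ker}d^*\cap C^{\bar k}$, $B_{\bar k}=d^*(C^{\overline{k+1}})=d^*(A_{\overline{k+1}})$. Given nonzero $c_{\bar k}\in\operatorname{Det}C^{\bar k}$, $x_{\bar k}\in\operatorname{Det}A^{\bar k}$, $y_{\bar k}\in\operatorname{Det}A_{\bar k}$, let $h_{\bar k}\in\operatorname{Det}H^{\bar k}$, $h'_{\bar k}\in\operatorname{Det}H_{\bar k}$ be the unique elements with $c_{\bar k}=\mu_{B^{\bar k},H^{\bar k},A^{\bar k}}(d(x_{\overline{k-1}})\otimes h_{\bar k}\otimes x_{\bar k})$ and $c_{\bar k}=\mu_{B_{\bar k},H_{\bar k},A_{\bar k}}(d^*(y_{\overline{k+1}})\otimes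 h'_{\bar k}\otimes y_{\bar k})$ (here $d(x)$, $d^*(y)$ are images under the maps induced by the isomorphisms $d:A^{\bar k}\to B^{\overline{k+1}}$, $d^*:A_{\bar k}\to B_{\overline{k-1}}$). Set $\phi(c)=h_{\bar0}\otimes h_{\bar1}^{-1}\in\operatorname{Det}H^\bullet(d)$ and $\phi'(c)=h'_{\bar0}\otimes h'^{-1}_{\bar1}\in\operatorname{Det}H_\bullet(d^* )$ for $c=c_{\bar0}\otimes c_{\bar1}^{-1}$ (identifying $H^{\bar k}\cong H^{\bar k}(d)$, $H_{\bar k}\cong H_{\bar k}(d^* )$). The Cappell–Miller torsion is $\tau(C^\bullet,d,d^* )=(-1)^{S(C^\bullet)}\phi(c)\,(\phi'(c))^{-1}\in\operatorname{Det}(H^\bullet(d))\otimes\operatorname{Det}(H_\bullet(d^* ))^{-1}$, where $S(C^\bullet)=\sum_{k=0,1}[\dim B_{\overline{k-1}}\dim B^{\overline{k+1}}+\dim B^{\overline{k+1}}\dim H_{\bar k}+\dim B_{\overline{k-1}}\dim H^{\bar k}]$. $C_+^{\bar k}:=\operatorname{Ker}d^*\cap C^{\bar k}$, $C_-^{\bar k}:=\operatorname{Ker}d\cap C^{\bar k}$. *)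

theory Defs
  imports "Jordan_Normal_Form.Char_Poly"
begin

text \<open>Concrete model: C^0 = k^n0, C^1 = k^n1 (column vectors), maps given by matrices.
  d restricted to C^0 is D0 (n1 x n0), d restricted to C^1 is D1 (n0 x n1);
  d* restricted to C^0 is E0 (n1 x n0), d* restricted to C^1 is E1 (n0 x n1).\<close>

definition col_span :: "nat \<Rightarrow> 'a::field vec list \<Rightarrow> 'a vec set" where
  "col_span n vs = {mat_of_cols n vs *\<^sub>v c | c. c \<in> carrier_vec (length vs)}"

definition lin_indep_list :: "nat \<Rightarrow> 'a::field vec list \<Rightarrow> bool" where
  "lin_indep_list n vs = (set vs \<subseteq> carrier_vec n \<and>
     (\<forall>c \<in> carrier_vec (length vs). mat_of_cols n vs *\<^sub>v c = 0\<^sub>v n \<longrightarrow> c = 0\<^sub>v (length vs)))"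

definition ker_mat :: "nat \<Rightarrow> 'a::field mat \<Rightarrow> 'a vec set" where
  "ker_mat n A = {v \<in> carrier_vec n. A *\<^sub>v v = 0\<^sub>v (dim_row A)}"

definition im_mat :: "nat \<Rightarrow> 'a::field mat \<Rightarrow> 'a vec set" where
  "im_mat n A = (\<lambda>v. A *\<^sub>v v) ` carrier_vec n"

text \<open>Determinant of the restriction of A (n x n) to a subspace W of k^n, computed in a basis of W.\<close>
definition restr_det :: "nat \<Rightarrow> 'a::field mat \<Rightarrow> 'a vec set \<Rightarrow> 'a" where
  "restr_det n A W = (SOME x. \<exists>bs M. lin_indep_list n bs \<and> col_span n bs = W \<and>
      M \<in> carrier_mat (length bs) (length bs) \<and>
      A * mat_of_cols n bs = mat_of_cols n bs * M \<and> x = det M)"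

text \<open>Admissible choice data for the torsion at one degree k (in C^k = k^n):
  dxa = d applied to a basis of A^{k-1}, hb = basis of H^k, xa = basis of A^k,
  dk = d on C^k, dprev = d on C^{k-1} (from C^{k-1} of dimension m).\<close>
definition dec_ok :: "nat \<Rightarrow> nat \<Rightarrow> 'a::field mat \<Rightarrow> 'a mat \<Rightarrow> 'a vec list \<Rightarrow> 'a vec list \<Rightarrow> 'a vec list \<Rightarrow> bool" where
  "dec_ok m n dprev dk xprev hb xa =
     (set xprev \<subseteq> carrier_vec m \<and> set hb \<subseteq> carrier_vec n \<and> set xa \<subseteq> carrier_vec n \<and>
      length (map (\<lambda>v. dprev *\<^sub>v v) xprev @ hb @ xa) = n \<and>
      lin_indep_list n (map (\<lambda>v. dprev *\<^sub>v v) xprev @ hb @ xa) \<and>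
      col_span n (map (\<lambda>v. dprev *\<^sub>v v) xprev @ hb) = ker_mat n dk \<and>
      col_span n (map (\<lambda>v. dprev *\<^sub>v v) xprev) = im_mat m dprev)"

text \<open>The data: xa0, xa1 bases of A^0, A^1 (d-side), hb0, hb1 bases of H^0, H^1;
  ya0, ya1 bases of A_0, A_1 (d*-side), hc0, hc1 bases of H_0, H_1.\<close>
definition cm_data :: "nat \<Rightarrow> nat \<Rightarrow> 'a::field mat \<Rightarrow> 'a mat \<Rightarrow> 'a mat \<Rightarrow> 'a mat \<Rightarrow>
   'a vec list \<Rightarrow> 'a vec list \<Rightarrow> 'a vec list \<Rightarrow> 'a vec list \<Rightarrow>
   'a vec list \<Rightarrow> 'a vec list \<Rightarrow> 'a vec list \<Rightarrow> 'a vec list \<Rightarrow> bool" where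
  "cm_data n0 n1 D0 D1 E0 E1 xa0 xa1 hb0 hb1 ya0 ya1 hc0 hc1 =
     (dec_ok n1 n0 D1 D0 xa1 hb0 xa0 \<and> dec_ok n0 n1 D0 D1 xa0 hb1 xa1 \<and>
      dec_ok n1 n0 E1 E0 ya1 hc0 ya0 \<and> dec_ok n0 n1 E0 E1 ya0 hc1 ya1)"

text \<open>The scalar h (coefficient w.r.t. the wedge of the basis hb of H^k) determined by
  c = gamma * e_1 \<and> ... \<and> e_n = mu(d(x_{k-1}) \<otimes> h \<otimes> x_k).\<close>
definition h_coeff :: "nat \<Rightarrow> 'a::field \<Rightarrow> 'a mat \<Rightarrow> 'a vec list \<Rightarrow> 'a vec list \<Rightarrow> 'a vec list \<Rightarrow> 'a" where
  "h_coeff n \<gamma> dprev xprev hb xa = \<gamma> / det (mat_of_cols n (map (\<lambda>v. dprev *\<^sub>v v) xprev @ hb @ xa))"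

text \<open>Cappell--Miller torsion, as the coefficient of
  (wedge hb0 \<otimes> (wedge hb1)^{-1}) \<otimes> (wedge hc0 \<otimes> (wedge hc1)^{-1})^{-1};
  c_k = gamma_k times the standard volume element of k^{n_k}.\<close>
definition cm_torsion :: "nat \<Rightarrow> nat \<Rightarrow> 'a::field mat \<Rightarrow> 'a mat \<Rightarrow> 'a mat \<Rightarrow> 'a mat \<Rightarrow> 'a \<Rightarrow> 'a \<Rightarrow>
   'a vec list \<Rightarrow> 'a vec list \<Rightarrow> 'a vec list \<Rightarrow> 'a vec list \<Rightarrow>
   'a vec list \<Rightarrow> 'a vec list \<Rightarrow> 'a vec list \<Rightarrow> 'a vec list \<Rightarrow> 'a" where
  "cm_torsion n0 n1 D0 D1 E0 E1 \<gamma>0 \<gamma>1 xa0 xa1 hb0 hb1 ya0 ya1 hc0 hc1 =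
    (let h0 = h_coeff n0 \<gamma>0 D1 xa1 hb0 xa0;
         h1 = h_coeff n1 \<gamma>1 D0 xa0 hb1 xa1;
         h0' = h_coeff n0 \<gamma>0 E1 ya1 hc0 ya0;
         h1' = h_coeff n1 \<gamma>1 E0 ya0 hc1 ya1;
         S = length ya0 * length xa0 + length xa0 * length hc0 + length ya0 * length hb0
           + length ya1 * length xa1 + length xa1 * length hc1 + length ya1 * length hb1
     in (-1) ^ S * ((h0 / h1) / (h0' / h1')))"

end

theory Submission imports Defs begin

definition hcat :: "'a::zero mat \<Rightarrow> 'a mat \<Rightarrow> 'a mat" where
  "hcat A B = four_block_mat A B (0\<^sub>m 0 (dim_col A)) (0\<^sub>m 0 (dim_col B))"

lemma hcat_carrier[simp,intro]: "A \<in> carrier_mat n a \<Longrightarrow> B \<in> carrier_mat n b \<Longrightarrow> hcat A B \<in> carrier_mat n (a+b)"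
  unfolding hcat_def by (metis add_0_right carrier_matD(2) four_block_carrier_mat zero_carrier_mat)

lemma zero_rows_eq: "M \<in> carrier_mat 0 c \<Longrightarrow> M = 0\<^sub>m 0 c"
  by (rule eq_matI, auto)

lemma zero_cols_eq: "M \<in> carrier_mat r 0 \<Longrightarrow> M = 0\<^sub>m r 0"
  by (rule eq_matI, auto)

lemma hcat_mult:
  fixes A :: "'a::comm_ring_1 mat"
  assumes A: "A \<in> carrier_mat n a" and B: "B \<in> carrier_mat n b"
   and G: "G \<in> carrier_mat a c" and H: "H \<in> carrier_mat a d"
   and K: "K \<in> carrier_mat b c" and L: "L \<in> carrier_mat b d"
  shows "hcat A B * four_block_mat G H K L = hcat (A*G+B*K) (A*H+B*L)"
proof -
  have "hcat A B * four_block_mat G H K L = four_block_mat (A*G+B*K) (A*H+B*L)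
     (0\<^sub>m 0 a * G + 0\<^sub>m 0 b * K) (0\<^sub>m 0 a * H + 0\<^sub>m 0 b * L)"
    unfolding hcat_def using A B
    by (simp add: mult_four_block_mat[OF A B zero_carrier_mat[of 0 a] zero_carrier_mat[of 0 b] G H K L])
  also have "0\<^sub>m 0 a * G + 0\<^sub>m 0 b * K = 0\<^sub>m 0 c" by (rule zero_rows_eq, insert G K, auto)
  also have "0\<^sub>m 0 a * H + 0\<^sub>m 0 b * L = 0\<^sub>m 0 d" by (rule zero_rows_eq, insert H L, auto)
  finally show ?thesis unfolding hcat_def using A B G H K L by auto
qed

lemma mult_hcat:
  fixes A :: "'a::comm_ring_1 mat"
  assumes M: "M \<in> carrier_mat m n" and A: "A \<in> carrier_mat n a" and B: "B \<in> carrier_mat n b"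
  shows "M * hcat A B = hcat (M*A) (M*B)"
proof (rule eq_matI)
  fix i j assume i: "i < dim_row (hcat (M*A) (M*B))" and j: "j < dim_col (hcat (M*A) (M*B))"
  have ij: "i < m" "j < a + b" using i j M A B by (auto simp: hcat_def)
  show "(M * hcat A B) $$ (i,j) = hcat (M*A) (M*B) $$ (i,j)"
  proof (cases "j < a")
    case True
    have "col (hcat A B) j = col A j"
      using A B True by (intro eq_vecI, auto simp: hcat_def)
    thus ?thesis using True ij M A B by (auto simp: hcat_def)
  next
    case False
    have "col (hcat A B) j = col B (j - a)"
      using A B False ij by (intro eq_vecI, auto simp: hcat_def)
    thus ?thesis using False ij M A B by (auto simp: hcat_def)
  qed
qed (insert M A B, auto simp: hcat_def)

lemma mat_of_cols_append:
  "mat_of_cols n (xs @ ys) = hcat (mat_of_cols n xs) (mat_of_cols n ys)"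
  by (rule eq_matI, auto simp: hcat_def mat_of_cols_index nth_append)

lemma mat_of_cols_map:
  assumes A: "A \<in> carrier_mat n m" and vs: "set vs \<subseteq> carrier_vec m"
  shows "mat_of_cols n (map (\<lambda>v. A *\<^sub>v v) vs) = A * mat_of_cols m vs"
proof (rule eq_matI)
  fix i j assume i: "i < dim_row (A * mat_of_cols m vs)" and j: "j < dim_col (A * mat_of_cols m vs)"
  hence j': "j < length vs" and i': "i < n" using A by auto
  have "col (mat_of_cols m vs) j = vs ! j" using j' vs by (intro col_mat_of_cols, auto)
  thus "mat_of_cols n (map (\<lambda>v. A *\<^sub>v v) vs) $$ (i, j) = (A * mat_of_cols m vs) $$ (i, j)"
    using i' j' A by (auto simp: mat_of_cols_index)
qed (insert A, auto)

lemma zero_mat_mult_vec[simp]: "v \<in> carrier_vec nc \<Longrightarrow> 0\<^sub>m nr nc *\<^sub>v v = 0\<^sub>v nr"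
  by (rule eq_vecI, auto)

lemma mat_mult_zero_vec[simp]: "A \<in> carrier_mat nr nc \<Longrightarrow> A *\<^sub>v 0\<^sub>v nc = 0\<^sub>v nr"
  by (rule eq_vecI, auto)

lemma append_vec_zero_dim: "w \<in> carrier_vec 0 \<Longrightarrow> v @\<^sub>v w = v"
  by (rule eq_vecI, auto)

lemma hcat_mult_vec:
  fixes A :: "'a::comm_ring_1 mat"
  assumes A: "A \<in> carrier_mat n a" and B: "B \<in> carrier_mat n b"
    and x: "x \<in> carrier_vec a" and y: "y \<in> carrier_vec b"
  shows "hcat A B *\<^sub>v (x @\<^sub>v y) = A *\<^sub>v x + B *\<^sub>v y"
proof -
  have "hcat A B *\<^sub>v (x @\<^sub>v y) = (A *\<^sub>v x + B *\<^sub>v y) @\<^sub>v (0\<^sub>m 0 a *\<^sub>v x + 0\<^sub>m 0 b *\<^sub>v y)"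
    unfolding hcat_def using A B
    by (simp add: four_block_mat_mult_vec[OF A B zero_carrier_mat[of 0 a] zero_carrier_mat[of 0 b] x y])
  also have "\<dots> = A *\<^sub>v x + B *\<^sub>v y" by (rule eq_vecI, insert A B x y, auto)
  finally show ?thesis .
qed

definition injm :: "nat \<Rightarrow> 'a::field mat \<Rightarrow> bool" where
  "injm k A = (\<forall>c\<in>carrier_vec k. A *\<^sub>v c = 0\<^sub>v (dim_row A) \<longrightarrow> c = 0\<^sub>v k)"

lemma lin_indep_injm: "lin_indep_list n vs \<longleftrightarrow> set vs \<subseteq> carrier_vec n \<and> injm (length vs) (mat_of_cols n vs)"
  unfolding lin_indep_list_def injm_def by auto

lemma injm_det: assumes A: "(A::'a::field mat) \<in> carrier_mat n n"
  shows "injm n A \<longleftrightarrow> det A \<noteq> 0"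
  unfolding injm_def det_0_iff_vec_prod_zero_field[OF A] using A by auto

lemma inv_exists: assumes A: "(A::'a::field mat) \<in> carrier_mat n n" and d: "det A \<noteq> 0"
  shows "\<exists>B\<in>carrier_mat n n. A * B = 1\<^sub>m n \<and> B * A = 1\<^sub>m n"
  using det_non_zero_imp_unit[OF A d, of "()"] unfolding Units_def ring_mat_def by auto

lemma wide_kernel: assumes C: "(C::'a::field mat) \<in> carrier_mat a k" and ak: "a < k"
  shows "\<exists>x\<in>carrier_vec k. x \<noteq> 0\<^sub>v k \<and> C *\<^sub>v x = 0\<^sub>v a"
proof -
  define C' where "C' = C @\<^sub>r 0\<^sub>m (k - a) k"
  have C': "C' \<in> carrier_mat k k" unfolding C'_def using C ak
    by (metis carrier_append_rows le_add_diff_inverse less_imp_le_nat zero_carrier_mat)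
  have k1: "k - 1 < k" using ak by auto
  have "multrow (k-1) 0 C' = C'"
  proof (rule eq_matI)
    fix i j assume i: "i < dim_row C'" and j: "j < dim_col C'"
    show "multrow (k-1) 0 C' $$ (i,j) = C' $$ (i,j)"
    proof (cases "i = k - 1")
      case True
      have "C' $$ (i,j) = 0" using True i j C ak C' unfolding C'_def append_rows_def by auto
      thus ?thesis using i j True by simp
    qed (insert i j, auto)
  qed auto
  hence "det C' = 0 * det C'" using det_multrow[OF k1 C', of 0] by simp
  hence "det C' = 0" by simp
  then obtain x where x: "x \<in> carrier_vec k" "x \<noteq> 0\<^sub>v k" "C' *\<^sub>v x = 0\<^sub>v k"
    using det_0_iff_vec_prod_zero_field[OF C'] by auto
  have "C' *\<^sub>v x = (C *\<^sub>v x) @\<^sub>v (0\<^sub>m (k - a) k *\<^sub>v x)"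
    unfolding C'_def by (rule mat_mult_append[OF C zero_carrier_mat[of "k-a" k] x(1)])
  also have "0\<^sub>m (k - a) k *\<^sub>v x = 0\<^sub>v (k-a)" using x(1) by simp
  finally have 1: "(C *\<^sub>v x) @\<^sub>v 0\<^sub>v (k-a) = 0\<^sub>v k" using x by simp
  have "0\<^sub>v k = 0\<^sub>v a @\<^sub>v (0\<^sub>v (k-a) :: 'a vec)" using ak by (intro eq_vecI, auto)
  with 1 have "(C *\<^sub>v x) @\<^sub>v 0\<^sub>v (k-a) = 0\<^sub>v a @\<^sub>v 0\<^sub>v (k-a)" by simp
  hence "C *\<^sub>v x = 0\<^sub>v a" using C x(1) by (subst (asm) append_vec_eq[of _ a], auto)
  thus ?thesis using x by auto
qed

lemma hcat_zero_cols: "A \<in> carrier_mat n a \<Longrightarrow> E \<in> carrier_mat n 0 \<Longrightarrow> hcat A E = A"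
  by (rule eq_matI, auto simp: hcat_def)

lemma injm_prefix:
  fixes A :: "'a::field mat"
  assumes A: "A \<in> carrier_mat n a" and B: "B \<in> carrier_mat n b" and inj: "injm (a+b) (hcat A B)"
  shows "injm a A"
  unfolding injm_def
proof (intro ballI impI)
  fix c assume c: "c \<in> carrier_vec a" and Ac: "A *\<^sub>v c = 0\<^sub>v (dim_row A)"
  have "hcat A B *\<^sub>v (c @\<^sub>v 0\<^sub>v b) = A *\<^sub>v c + B *\<^sub>v 0\<^sub>v b" by (rule hcat_mult_vec[OF A B c], auto)
  also have "\<dots> = 0\<^sub>v n" using Ac A B by auto
  finally have "hcat A B *\<^sub>v (c @\<^sub>v 0\<^sub>v b) = 0\<^sub>v (dim_row (hcat A B))" using hcat_carrier[OF A B] by auto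
  with inj c have "c @\<^sub>v 0\<^sub>v b = 0\<^sub>v (a+b)" unfolding injm_def by auto
  also have "0\<^sub>v (a+b) = 0\<^sub>v a @\<^sub>v (0\<^sub>v b :: 'a vec)" by (intro eq_vecI, auto)
  finally show "c = 0\<^sub>v a" using c by (subst (asm) append_vec_eq[of _ a], auto)
qed

lemma span_factor:
  assumes ws: "set ws \<subseteq> col_span n vs"
  shows "\<exists>C\<in>carrier_mat (length vs) (length ws). mat_of_cols n ws = mat_of_cols n vs * C"
proof -
  have "\<forall>w\<in>set ws. \<exists>c. c \<in> carrier_vec (length vs) \<and> w = mat_of_cols n vs *\<^sub>v c"
    using ws unfolding col_span_def by auto
  then obtain f where f: "\<And>w. w \<in> set ws \<Longrightarrow> f w \<in> carrier_vec (length vs) \<and> w = mat_of_cols n vs *\<^sub>v f w"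
    by metis
  define C where "C = mat_of_cols (length vs) (map f ws)"
  have C: "C \<in> carrier_mat (length vs) (length ws)" unfolding C_def by auto
  have "mat_of_cols n vs * C = mat_of_cols n (map (\<lambda>v. mat_of_cols n vs *\<^sub>v v) (map f ws))"
    unfolding C_def by (rule mat_of_cols_map[symmetric], insert f, auto)
  also have "map (\<lambda>v. mat_of_cols n vs *\<^sub>v v) (map f ws) = ws"
    unfolding map_map by (rule map_idI, unfold o_def, metis f)
  finally have "mat_of_cols n vs * C = mat_of_cols n ws" .
  thus ?thesis using C by (intro bexI[of _ C], auto)
qed

lemma injm_cancel:
  fixes V :: "'a::field mat"
  assumes inj: "injm k V" and V: "V \<in> carrier_mat n k" and C: "C \<in> carrier_mat k m" and C': "C' \<in> carrier_mat k m"
    and eq: "V * C = V * C'"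
  shows "C = C'"
proof (rule eq_matI)
  fix i j assume i: "i < dim_row C'" and j: "j < dim_col C'"
  have "V *\<^sub>v col C j = V *\<^sub>v col C' j" using eq col_mult2[OF V C, of j] col_mult2[OF V C', of j] j C' by auto
  hence "V *\<^sub>v (col C j - col C' j) = 0\<^sub>v n" using V C C' by (subst mult_minus_distrib_mat_vec[OF V], auto)
  moreover have "col C j \<in> carrier_vec k" "col C' j \<in> carrier_vec k" using col_dim[of C j] col_dim[of C' j] C C' by auto
  hence "col C j - col C' j \<in> carrier_vec k" by auto
  ultimately have "col C j - col C' j = 0\<^sub>v k" using inj V unfolding injm_def by auto
  hence "(col C j - col C' j) $ i = 0" using i C' by simp
  thus "C $$ (i,j) = C' $$ (i,j)" using i j C C' by simp
qed (insert C C', auto)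

lemma decomp:
  fixes A :: "'a::field mat"
  assumes A: "A \<in> carrier_mat n a" and B: "B \<in> carrier_mat n b" and n: "a + b = n"
    and d: "det (hcat A B) \<noteq> 0" and Z: "Z \<in> carrier_mat n c"
  shows "\<exists>H\<in>carrier_mat a c. \<exists>K\<in>carrier_mat b c. Z = A*H + B*K"
proof -
  have V: "hcat A B \<in> carrier_mat n n" using hcat_carrier[OF A B] n by simp
  obtain W where W: "W \<in> carrier_mat n n" "hcat A B * W = 1\<^sub>m n" using inv_exists[OF V d] by auto
  define N where "N = W * Z"
  have N: "N \<in> carrier_mat (a+b) (c+0)" using W Z n unfolding N_def by auto
  obtain H X K Y where sb: "split_block N a c = (H,X,K,Y)" by (metis prod_cases4)
  have dims: "dim_row N = a + b" "dim_col N = c + 0" using N by auto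
  note sp = split_block[OF sb dims]
  have "Z = hcat A B * N" unfolding N_def using V W Z by (simp add: assoc_mult_mat[symmetric])
  also have "\<dots> = hcat (A*H + B*K) (A*X + B*Y)" unfolding sp(5) by (rule hcat_mult[OF A B sp(1-4)])
  also have "\<dots> = A*H + B*K" by (rule hcat_zero_cols, insert A B sp, auto)
  finally show ?thesis using sp by blast
qed

lemma lin_indep_prefix: "lin_indep_list n (xs @ ys) \<Longrightarrow> lin_indep_list n xs"
  unfolding lin_indep_injm mat_of_cols_append
  by (auto intro: injm_prefix[of _ n _ "mat_of_cols n ys" "length ys"])

lemma in_col_span_self: assumes vs: "set vs \<subseteq> carrier_vec n" and v: "v \<in> set vs"
  shows "v \<in> col_span n vs"
proof -
  obtain j where j: "j < length vs" "v = vs ! j" using v by (metis in_set_conv_nth)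
  have "mat_of_cols n vs *\<^sub>v unit_vec (length vs) j = v"
  proof (rule eq_vecI)
    fix i assume "i < dim_vec v"
    hence i: "i < n" using vs v by auto
    show "(mat_of_cols n vs *\<^sub>v unit_vec (length vs) j) $ i = v $ i"
      using i j by (simp add: mat_of_cols_index)
  qed (insert vs v, auto)
  thus ?thesis unfolding col_span_def by (intro CollectI exI[of _ "unit_vec (length vs) j"], auto)
qed

lemma col_span_self: "set vs \<subseteq> carrier_vec n \<Longrightarrow> set vs \<subseteq> col_span n vs"
  using in_col_span_self by blast

lemma empty_mid:
  fixes as :: "'a::field vec list"
  assumes li: "lin_indep_list n (as @ bs)" and sp: "set bs \<subseteq> col_span n as"
  shows "bs = []"
proof (rule ccontr)
  assume ne: "bs \<noteq> []"
  define A where "A = mat_of_cols n as"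
  define B where "B = mat_of_cols n bs"
  let ?a = "length as" let ?b = "length bs"
  have A: "A \<in> carrier_mat n ?a" and B: "B \<in> carrier_mat n ?b" unfolding A_def B_def by auto
  obtain C where C: "C \<in> carrier_mat ?a ?b" and BC: "B = A * C"
    using span_factor[OF sp] unfolding A_def B_def by auto
  have inj: "injm (?a + ?b) (hcat A B)" using li unfolding lin_indep_injm A_def B_def mat_of_cols_append by auto
  have HC: "hcat (1\<^sub>m ?a) C \<in> carrier_mat ?a (?a + ?b)" using C by auto
  obtain x where x: "x \<in> carrier_vec (?a + ?b)" "x \<noteq> 0\<^sub>v (?a + ?b)" "hcat (1\<^sub>m ?a) C *\<^sub>v x = 0\<^sub>v ?a"
    using wide_kernel[OF HC] ne by auto
  have "hcat A B = A * hcat (1\<^sub>m ?a) C" unfolding BC using A C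
    by (subst mult_hcat[OF A], auto)
  hence "hcat A B *\<^sub>v x = A *\<^sub>v (hcat (1\<^sub>m ?a) C *\<^sub>v x)" using A HC x by auto
  also have "\<dots> = 0\<^sub>v (dim_row (hcat A B))" using x A B by (auto simp: hcat_def)
  finally show False using inj x unfolding injm_def by auto
qed

lemma square_from_inverse:
  fixes T :: "'a::field mat"
  assumes T: "T \<in> carrier_mat k0 k" and S: "S \<in> carrier_mat k k0" and ST: "S * T = 1\<^sub>m k"
  shows "k \<le> k0"
proof (rule ccontr)
  assume "\<not> k \<le> k0"
  then obtain x where x: "x \<in> carrier_vec k" "x \<noteq> 0\<^sub>v k" "T *\<^sub>v x = 0\<^sub>v k0"
    using wide_kernel[OF T] by auto
  have "x = (S * T) *\<^sub>v x" using ST x by auto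
  also have "\<dots> = S *\<^sub>v (T *\<^sub>v x)" using S T x by auto
  also have "\<dots> = 0\<^sub>v k" using x S by auto
  finally show False using x by auto
qed

lemma restr_det_eq:
  fixes A :: "'a::field mat"
  assumes A: "A \<in> carrier_mat n n" and li: "lin_indep_list n bs0" and sp: "col_span n bs0 = W"
   and M0: "M0 \<in> carrier_mat (length bs0) (length bs0)"
   and eq: "A * mat_of_cols n bs0 = mat_of_cols n bs0 * M0"
  shows "restr_det n A W = det M0"
proof -
  let ?P = "\<lambda>x. \<exists>bs M. lin_indep_list n bs \<and> col_span n bs = W \<and>
      M \<in> carrier_mat (length bs) (length bs) \<and>
      A * mat_of_cols n bs = mat_of_cols n bs * M \<and> x = det M"
  have "?P (det M0)" using li sp M0 eq by blast
  hence "?P (restr_det n A W)" unfolding restr_det_def by (rule someI)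
  then obtain bs M where li': "lin_indep_list n bs" and sp': "col_span n bs = W"
    and M: "M \<in> carrier_mat (length bs) (length bs)"
    and eq': "A * mat_of_cols n bs = mat_of_cols n bs * M" and x: "restr_det n A W = det M" by blast
  define B0 where "B0 = mat_of_cols n bs0"
  define B where "B = mat_of_cols n bs"
  let ?kz = "length bs0" let ?kk = "length bs"
  have B0: "B0 \<in> carrier_mat n ?kz" and B: "B \<in> carrier_mat n ?kk" unfolding B0_def B_def by auto
  have inj0: "injm ?kz B0" and inj: "injm ?kk B" using li li' unfolding lin_indep_injm B0_def B_def by auto
  have c0: "set bs0 \<subseteq> carrier_vec n" and c: "set bs \<subseteq> carrier_vec n" using li li' unfolding lin_indep_list_def by auto
  have "set bs \<subseteq> col_span n bs0" using col_span_self[OF c] sp sp' by auto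
  then obtain T where T: "T \<in> carrier_mat ?kz ?kk" and BT: "B = B0 * T"
    using span_factor unfolding B_def B0_def by blast
  have "set bs0 \<subseteq> col_span n bs" using col_span_self[OF c0] sp sp' by auto
  then obtain S where S: "S \<in> carrier_mat ?kk ?kz" and BS: "B0 = B * S"
    using span_factor unfolding B_def B0_def by blast
  have "B0 * (T * S) = (B0 * T) * S" by (rule assoc_mult_mat[symmetric, OF B0 T S])
  also have "\<dots> = B0" unfolding BT[symmetric] BS[symmetric] ..
  also have "\<dots> = B0 * 1\<^sub>m ?kz" using B0 by simp
  finally have "B0 * (T * S) = B0 * 1\<^sub>m ?kz" .
  hence TS: "T * S = 1\<^sub>m ?kz" using injm_cancel[OF inj0 B0, of "T * S" ?kz "1\<^sub>m ?kz"] T S by auto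
  have "B * (S * T) = (B * S) * T" by (rule assoc_mult_mat[symmetric, OF B S T])
  also have "\<dots> = B" unfolding BS[symmetric] BT[symmetric] ..
  also have "\<dots> = B * 1\<^sub>m ?kk" using B by simp
  finally have "B * (S * T) = B * 1\<^sub>m ?kk" .
  hence ST: "S * T = 1\<^sub>m ?kk" using injm_cancel[OF inj B, of "S * T" ?kk "1\<^sub>m ?kk"] T S by auto
  have "?kk \<le> ?kz" by (rule square_from_inverse[OF T S ST])
  moreover have "?kz \<le> ?kk" by (rule square_from_inverse[OF S T TS])
  ultimately have kk: "?kk = ?kz" by simp
  have "B0 * (M0 * T) = B0 * (T * M)"
  proof -
    have "B0 * (M0 * T) = (B0 * M0) * T" by (rule assoc_mult_mat[symmetric, OF B0 M0 T])
    also have "\<dots> = (A * B0) * T" using eq unfolding B0_def by simp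
    also have "\<dots> = A * (B0 * T)" using A B0 T by simp
    also have "\<dots> = A * B" unfolding BT ..
    also have "\<dots> = B * M" using eq' unfolding B_def .
    also have "\<dots> = (B0 * T) * M" unfolding BT ..
    also have "\<dots> = B0 * (T * M)" using B0 T M by simp
    finally show ?thesis .
  qed
  moreover have "M0 * T \<in> carrier_mat ?kz ?kk" "T * M \<in> carrier_mat ?kz ?kk" using M0 T M by auto
  ultimately have MT: "M0 * T = T * M" using injm_cancel[OF inj0 B0, of "M0 * T" ?kk "T * M"] by blast
  have Tsq: "T \<in> carrier_mat ?kz ?kz" using T kk by simp
  have Ssq: "S \<in> carrier_mat ?kz ?kz" using S kk by simp
  have Msq: "M \<in> carrier_mat ?kz ?kz" using M kk by simp
  have "det T * det S = 1" using det_mult[OF Tsq Ssq] TS by simp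
  hence dT: "det T \<noteq> 0" by auto
  have "det M0 * det T = det T * det M" using arg_cong[OF MT, of det] det_mult[OF M0 Tsq] det_mult[OF Tsq Msq] by simp
  hence "det M0 = det M" using dT by (simp add: mult.commute)
  thus ?thesis using x by simp
qed

lemma mv_assoc: "A \<in> carrier_mat nr n \<Longrightarrow> B \<in> carrier_mat n nc \<Longrightarrow> v \<in> carrier_vec nc \<Longrightarrow>
  A *\<^sub>v (B *\<^sub>v v) = (A * B) *\<^sub>v v" by simp

lemma ker_to_im:
  fixes D :: "'a::field mat"
  assumes D: "D \<in> carrier_mat n1 n0" and D': "D' \<in> carrier_mat n0 n1"
   and E: "E \<in> carrier_mat n1 n0" and E': "E' \<in> carrier_mat n0 n1"
   and DD': "D * D' = 0\<^sub>m n1 n1"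
   and inj0: "\<forall>x\<in>carrier_vec n0. E' *\<^sub>v (D *\<^sub>v x) + D' *\<^sub>v (E *\<^sub>v x) = 0\<^sub>v n0 \<longrightarrow> x = 0\<^sub>v n0"
   and inj1: "\<forall>x\<in>carrier_vec n1. E *\<^sub>v (D' *\<^sub>v x) + D *\<^sub>v (E' *\<^sub>v x) = 0\<^sub>v n1 \<longrightarrow> x = 0\<^sub>v n1"
   and DD: "D' * D = 0\<^sub>m n0 n0"
   and v: "v \<in> carrier_vec n0" and Dv: "D *\<^sub>v v = 0\<^sub>v n1"
  shows "\<exists>w\<in>carrier_vec n0. D *\<^sub>v w = 0\<^sub>v n1 \<and> v = D' *\<^sub>v (E *\<^sub>v w)"
proof -
  define L0 where "L0 = E' * D + D' * E"
  have L0: "L0 \<in> carrier_mat n0 n0" unfolding L0_def using D D' E E' by auto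
  have L0x: "L0 *\<^sub>v x = E' *\<^sub>v (D *\<^sub>v x) + D' *\<^sub>v (E *\<^sub>v x)" if x: "x \<in> carrier_vec n0" for x
    unfolding L0_def using D D' E E' x by (subst add_mult_distrib_mat_vec[of _ n0 n0], auto)
  have "injm n0 L0" unfolding injm_def using L0 L0x inj0 by auto
  hence "det L0 \<noteq> 0" using injm_det[OF L0] by auto
  then obtain W where W: "W \<in> carrier_mat n0 n0" "L0 * W = 1\<^sub>m n0" using inv_exists[OF L0] by auto
  define w where "w = W *\<^sub>v v"
  have w: "w \<in> carrier_vec n0" unfolding w_def using W v by auto
  have Lw: "L0 *\<^sub>v w = v" unfolding w_def mv_assoc[OF L0 W(1) v] W(2) using v by simp
  have DD'x: "D *\<^sub>v (D' *\<^sub>v x) = 0\<^sub>v n1" if "x \<in> carrier_vec n1" for x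
    unfolding mv_assoc[OF D D' that] DD' using that by simp
  have DD2x: "D' *\<^sub>v (D *\<^sub>v x) = 0\<^sub>v n0" if "x \<in> carrier_vec n0" for x
    unfolding mv_assoc[OF D' D that] DD using that by simp
  have "D *\<^sub>v v = D *\<^sub>v (E' *\<^sub>v (D *\<^sub>v w)) + D *\<^sub>v (D' *\<^sub>v (E *\<^sub>v w))"
    unfolding Lw[symmetric] L0x[OF w] using D D' E E' w by (subst mult_add_distrib_mat_vec[of _ n1 n0], auto)
  also have "D *\<^sub>v (D' *\<^sub>v (E *\<^sub>v w)) = 0\<^sub>v n1" using DD'x E w by auto
  finally have 1: "D *\<^sub>v (E' *\<^sub>v (D *\<^sub>v w)) = 0\<^sub>v n1" using Dv D E' w by auto
  have "E *\<^sub>v (D' *\<^sub>v (D *\<^sub>v w)) + D *\<^sub>v (E' *\<^sub>v (D *\<^sub>v w)) = 0\<^sub>v n1"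
    using 1 DD2x[OF w] E by simp
  hence Dw: "D *\<^sub>v w = 0\<^sub>v n1" using inj1 D w by auto
  have "v = E' *\<^sub>v (D *\<^sub>v w) + D' *\<^sub>v (E *\<^sub>v w)" using Lw L0x[OF w] by simp
  also have "\<dots> = D' *\<^sub>v (E *\<^sub>v w)" unfolding Dw using E' D' E w by simp
  finally show ?thesis using w Dw by auto
qed

lemma ker_eq_im:
  fixes D :: "'a::field mat"
  assumes D: "D \<in> carrier_mat n1 n0" and D': "D' \<in> carrier_mat n0 n1"
   and E: "E \<in> carrier_mat n1 n0" and E': "E' \<in> carrier_mat n0 n1"
   and DD': "D * D' = 0\<^sub>m n1 n1"
   and inj0: "\<forall>x\<in>carrier_vec n0. E' *\<^sub>v (D *\<^sub>v x) + D' *\<^sub>v (E *\<^sub>v x) = 0\<^sub>v n0 \<longrightarrow> x = 0\<^sub>v n0"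
   and inj1: "\<forall>x\<in>carrier_vec n1. E *\<^sub>v (D' *\<^sub>v x) + D *\<^sub>v (E' *\<^sub>v x) = 0\<^sub>v n1 \<longrightarrow> x = 0\<^sub>v n1"
   and DD: "D' * D = 0\<^sub>m n0 n0"
  shows "ker_mat n0 D = im_mat n1 D'"
proof
  show "ker_mat n0 D \<subseteq> im_mat n1 D'"
  proof
    fix v assume "v \<in> ker_mat n0 D"
    hence v: "v \<in> carrier_vec n0" "D *\<^sub>v v = 0\<^sub>v n1" unfolding ker_mat_def using D by auto
    from ker_to_im[OF D D' E E' DD' inj0 inj1 DD v] obtain w where "w \<in> carrier_vec n0" "v = D' *\<^sub>v (E *\<^sub>v w)" by auto
    thus "v \<in> im_mat n1 D'" unfolding im_mat_def using E by auto
  qed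
  show "im_mat n1 D' \<subseteq> ker_mat n0 D"
  proof
    fix v assume "v \<in> im_mat n1 D'"
    then obtain u where u: "u \<in> carrier_vec n1" "v = D' *\<^sub>v u" unfolding im_mat_def by auto
    have "D *\<^sub>v v = 0\<^sub>v n1" unfolding u(2) mv_assoc[OF D D' u(1)] DD' using u by simp
    thus "v \<in> ker_mat n0 D" unfolding ker_mat_def using u D D' by auto
  qed
qed

lemma bij_part:
  fixes D :: "'a::field mat"
  assumes D: "D \<in> carrier_mat n1 n0" and D': "D' \<in> carrier_mat n0 n1"
   and E: "E \<in> carrier_mat n1 n0" and E': "E' \<in> carrier_mat n0 n1"
   and DD': "D * D' = 0\<^sub>m n1 n1"
   and inj0: "\<forall>x\<in>carrier_vec n0. E' *\<^sub>v (D *\<^sub>v x) + D' *\<^sub>v (E *\<^sub>v x) = 0\<^sub>v n0 \<longrightarrow> x = 0\<^sub>v n0"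
   and inj1: "\<forall>x\<in>carrier_vec n1. E *\<^sub>v (D' *\<^sub>v x) + D *\<^sub>v (E' *\<^sub>v x) = 0\<^sub>v n1 \<longrightarrow> x = 0\<^sub>v n1"
   and DD: "D' * D = 0\<^sub>m n0 n0"
  shows "bij_betw (\<lambda>v. (D' * E) *\<^sub>v v) (ker_mat n0 D) (ker_mat n0 D)"
  unfolding bij_betw_def
proof
  have f: "(D' * E) *\<^sub>v v = D' *\<^sub>v (E *\<^sub>v v)" if "v \<in> carrier_vec n0" for v using that D' E by simp
  show "inj_on (\<lambda>v. (D' * E) *\<^sub>v v) (ker_mat n0 D)"
  proof (rule inj_onI)
    fix v1 v2 assume v1: "v1 \<in> ker_mat n0 D" and v2: "v2 \<in> ker_mat n0 D"
      and eq: "(D' * E) *\<^sub>v v1 = (D' * E) *\<^sub>v v2"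
    from v1 v2 D have c: "v1 \<in> carrier_vec n0" "v2 \<in> carrier_vec n0" "D *\<^sub>v v1 = 0\<^sub>v n1" "D *\<^sub>v v2 = 0\<^sub>v n1"
      unfolding ker_mat_def by auto
    define x where "x = v1 - v2"
    have x: "x \<in> carrier_vec n0" unfolding x_def using c by auto
    have Dx: "D *\<^sub>v x = 0\<^sub>v n1" unfolding x_def using c D by (simp add: mult_minus_distrib_mat_vec)
    have "D' *\<^sub>v (E *\<^sub>v x) = (D' * E) *\<^sub>v x" using f x by simp
    also have "\<dots> = (D' * E) *\<^sub>v v1 - (D' * E) *\<^sub>v v2" unfolding x_def using c D' E
      by (subst mult_minus_distrib_mat_vec[of _ n0 n0], auto)
    also have "\<dots> = 0\<^sub>v n0" unfolding eq using D' E c by auto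
    finally have "E' *\<^sub>v (D *\<^sub>v x) + D' *\<^sub>v (E *\<^sub>v x) = 0\<^sub>v n0" using Dx E' by simp
    hence "x = 0\<^sub>v n0" using inj0 x by auto
    thus "v1 = v2" unfolding x_def using c
      by (metis (no_types, lifting) eq_vecI carrier_vecD index_minus_vec(1) index_zero_vec(1) eq_iff_diff_eq_0)
  qed
  show "(\<lambda>v. (D' * E) *\<^sub>v v) ` ker_mat n0 D = ker_mat n0 D"
  proof
    show "(\<lambda>v. (D' * E) *\<^sub>v v) ` ker_mat n0 D \<subseteq> ker_mat n0 D"
    proof
      fix u assume "u \<in> (\<lambda>v. (D' * E) *\<^sub>v v) ` ker_mat n0 D"
      then obtain v where v: "v \<in> carrier_vec n0" "u = D' *\<^sub>v (E *\<^sub>v v)" using f unfolding ker_mat_def by auto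
      have Ev: "E *\<^sub>v v \<in> carrier_vec n1" using E v by simp
      have "D *\<^sub>v u = 0\<^sub>v n1" unfolding v(2) mv_assoc[OF D D' Ev] DD' using Ev by simp
      thus "u \<in> ker_mat n0 D" unfolding ker_mat_def using v D D' E by auto
    qed
    show "ker_mat n0 D \<subseteq> (\<lambda>v. (D' * E) *\<^sub>v v) ` ker_mat n0 D"
    proof
      fix u assume "u \<in> ker_mat n0 D"
      hence u: "u \<in> carrier_vec n0" "D *\<^sub>v u = 0\<^sub>v n1" unfolding ker_mat_def using D by auto
      from ker_to_im[OF D D' E E' DD' inj0 inj1 DD u] obtain w where
        w: "w \<in> carrier_vec n0" "D *\<^sub>v w = 0\<^sub>v n1" "u = D' *\<^sub>v (E *\<^sub>v w)" by auto
      have "w \<in> ker_mat n0 D" unfolding ker_mat_def using w D by auto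
      moreover have "u = (D' * E) *\<^sub>v w" using w(3) f[OF w(1)] by simp
      ultimately show "u \<in> (\<lambda>v. (D' * E) *\<^sub>v v) ` ker_mat n0 D" by blast
    qed
  qed
qed

lemma zero_append_split: "0\<^sub>v (n0 + n1) = (0\<^sub>v n0 @\<^sub>v (0\<^sub>v n1 :: 'a::zero vec))"
  by (rule eq_vecI, auto)

lemma lap_inj:
  fixes L0 :: "'a::field mat"
  assumes L0: "L0 \<in> carrier_mat n0 n0" and L1: "L1 \<in> carrier_mat n1 n1"
    and lap: "\<not> eigenvalue (four_block_mat L0 (0\<^sub>m n0 n1) (0\<^sub>m n1 n0) L1) 0"
  shows "\<forall>x\<in>carrier_vec n0. L0 *\<^sub>v x = 0\<^sub>v n0 \<longrightarrow> x = 0\<^sub>v n0"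
    and "\<forall>x\<in>carrier_vec n1. L1 *\<^sub>v x = 0\<^sub>v n1 \<longrightarrow> x = 0\<^sub>v n1"
proof -
  let ?M = "four_block_mat L0 (0\<^sub>m n0 n1) (0\<^sub>m n1 n0) L1"
  have dM: "dim_row ?M = n0 + n1" using L0 L1 by simp
  have ev: "eigenvector ?M v 0" if v: "v \<in> carrier_vec (n0+n1)" "v \<noteq> 0\<^sub>v (n0+n1)" "?M *\<^sub>v v = 0\<^sub>v (n0+n1)" for v
    unfolding eigenvector_def dM using v by auto
  show "\<forall>x\<in>carrier_vec n0. L0 *\<^sub>v x = 0\<^sub>v n0 \<longrightarrow> x = 0\<^sub>v n0"
  proof (intro ballI impI, rule ccontr)
    fix x assume x: "x \<in> carrier_vec n0" and Lx: "L0 *\<^sub>v x = 0\<^sub>v n0" and nz: "x \<noteq> 0\<^sub>v n0"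
    let ?v = "x @\<^sub>v 0\<^sub>v n1"
    have "?M *\<^sub>v ?v = L0 *\<^sub>v x @\<^sub>v L1 *\<^sub>v 0\<^sub>v n1" by (rule mult_mat_vec_split[OF L0 L1 x], auto)
    hence "?M *\<^sub>v ?v = 0\<^sub>v (n0+n1)" using Lx L1 by (simp only: zero_append_split[of n0 n1] mat_mult_zero_vec[OF L1])
    moreover have "?v \<noteq> 0\<^sub>v (n0+n1)" unfolding zero_append_split using nz x by (subst append_vec_eq[of _ n0], auto)
    moreover have "?v \<in> carrier_vec (n0+n1)" using x by auto
    ultimately have "eigenvector ?M ?v 0" using ev by blast
    thus False using lap unfolding eigenvalue_def by blast
  qed
  show "\<forall>x\<in>carrier_vec n1. L1 *\<^sub>v x = 0\<^sub>v n1 \<longrightarrow> x = 0\<^sub>v n1"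
  proof (intro ballI impI, rule ccontr)
    fix x assume x: "x \<in> carrier_vec n1" and Lx: "L1 *\<^sub>v x = 0\<^sub>v n1" and nz: "x \<noteq> 0\<^sub>v n1"
    let ?v = "0\<^sub>v n0 @\<^sub>v x"
    have "?M *\<^sub>v ?v = L0 *\<^sub>v 0\<^sub>v n0 @\<^sub>v L1 *\<^sub>v x" by (rule mult_mat_vec_split[OF L0 L1 _ x], auto)
    hence "?M *\<^sub>v ?v = 0\<^sub>v (n0+n1)" using Lx L0 by (simp only: zero_append_split[of n0 n1] mat_mult_zero_vec[OF L0])
    moreover have "?v \<noteq> 0\<^sub>v (n0+n1)" unfolding zero_append_split using nz x by (subst append_vec_eq[of _ n0], auto)
    moreover have "?v \<in> carrier_vec (n0+n1)" using x by auto
    ultimately have "eigenvector ?M ?v 0" using ev by blast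
    thus False using lap unfolding eigenvalue_def by blast
  qed
qed

lemma lin_indep_det: "lin_indep_list n vs \<Longrightarrow> length vs = n \<Longrightarrow> det (mat_of_cols n vs) \<noteq> 0"
  using injm_det[of "mat_of_cols n vs" n] unfolding lin_indep_injm by auto

lemma lin_indep_carrier: "lin_indep_list n vs \<Longrightarrow> set vs \<subseteq> carrier_vec n"
  unfolding lin_indep_list_def by auto

lemma zero_mult_left: "A \<in> carrier_mat m n \<Longrightarrow> B \<in> carrier_mat n k \<Longrightarrow> A * B = 0\<^sub>m m k \<Longrightarrow> C \<in> carrier_mat k c
  \<Longrightarrow> A * (B * C) = 0\<^sub>m m c"
proof -
  assume A: "A \<in> carrier_mat m n" and B: "B \<in> carrier_mat n k" and AB: "A * B = 0\<^sub>m m k" and C: "C \<in> carrier_mat k c"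
  have "A * (B * C) = (A * B) * C" using A B C by simp
  also have "\<dots> = 0\<^sub>m m c" unfolding AB using C by simp
  finally show ?thesis .
qed

lemma torsion_core:
  fixes D0 D1 E0 E1 :: "'a::field mat" and n0 n1 :: nat
  assumes D0: "D0 \<in> carrier_mat n1 n0" and D1: "D1 \<in> carrier_mat n0 n1"
    and E0: "E0 \<in> carrier_mat n1 n0" and E1: "E1 \<in> carrier_mat n0 n1"
    and dd0: "D1 * D0 = 0\<^sub>m n0 n0" and dd1: "D0 * D1 = 0\<^sub>m n1 n1"
    and ee0: "E1 * E0 = 0\<^sub>m n0 n0" and ee1: "E0 * E1 = 0\<^sub>m n1 n1"
    and lA0: "\<forall>x\<in>carrier_vec n0. E1 *\<^sub>v (D0 *\<^sub>v x) + D1 *\<^sub>v (E0 *\<^sub>v x) = 0\<^sub>v n0 \<longrightarrow> x = 0\<^sub>v n0"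
    and lA1: "\<forall>x\<in>carrier_vec n1. E0 *\<^sub>v (D1 *\<^sub>v x) + D0 *\<^sub>v (E1 *\<^sub>v x) = 0\<^sub>v n1 \<longrightarrow> x = 0\<^sub>v n1"
    and kD0: "ker_mat n0 D0 = im_mat n1 D1" and kD1: "ker_mat n1 D1 = im_mat n0 D0"
    and kE0: "ker_mat n0 E0 = im_mat n1 E1" and kE1: "ker_mat n1 E1 = im_mat n0 E0"
    and g0: "\<gamma>0 \<noteq> 0" and g1: "\<gamma>1 \<noteq> 0"
    and cm: "cm_data n0 n1 D0 D1 E0 E1 xa0 xa1 hb0 hb1 ya0 ya1 hc0 hc1"
  shows "cm_torsion n0 n1 D0 D1 E0 E1 \<gamma>0 \<gamma>1 xa0 xa1 hb0 hb1 ya0 ya1 hc0 hc1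
              = restr_det n0 (E1 * D0) (ker_mat n0 E0) / restr_det n1 (E0 * D1) (ker_mat n1 E1)"
proof -
  let ?d1 = "map (\<lambda>v. D1 *\<^sub>v v) xa1" let ?d0 = "map (\<lambda>v. D0 *\<^sub>v v) xa0"
  let ?e1 = "map (\<lambda>v. E1 *\<^sub>v v) ya1" let ?e0 = "map (\<lambda>v. E0 *\<^sub>v v) ya0"
  from cm have d0: "dec_ok n1 n0 D1 D0 xa1 hb0 xa0" and d1: "dec_ok n0 n1 D0 D1 xa0 hb1 xa1"
    and e0: "dec_ok n1 n0 E1 E0 ya1 hc0 ya0" and e1: "dec_ok n0 n1 E0 E1 ya0 hc1 ya1"
    unfolding cm_data_def by auto
  note d0 = d0[unfolded dec_ok_def] and d1 = d1[unfolded dec_ok_def]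
    and e0 = e0[unfolded dec_ok_def] and e1 = e1[unfolded dec_ok_def]
  have li_d0: "lin_indep_list n0 ((?d1 @ hb0) @ xa0)" using d0 by simp
  have li_d1: "lin_indep_list n1 ((?d0 @ hb1) @ xa1)" using d1 by simp
  have li_e0: "lin_indep_list n0 ((?e1 @ hc0) @ ya0)" using e0 by simp
  have li_e1: "lin_indep_list n1 ((?e0 @ hc1) @ ya1)" using e1 by simp
  have hb0: "hb0 = []"
  proof (rule empty_mid)
    show li: "lin_indep_list n0 (?d1 @ hb0)" by (rule lin_indep_prefix[OF li_d0])
    have "set hb0 \<subseteq> col_span n0 (?d1 @ hb0)" using col_span_self[OF lin_indep_carrier[OF li]] by auto
    thus "set hb0 \<subseteq> col_span n0 ?d1" using d0 kD0 by auto
  qed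
  have hb1: "hb1 = []"
  proof (rule empty_mid)
    show li: "lin_indep_list n1 (?d0 @ hb1)" by (rule lin_indep_prefix[OF li_d1])
    have "set hb1 \<subseteq> col_span n1 (?d0 @ hb1)" using col_span_self[OF lin_indep_carrier[OF li]] by auto
    thus "set hb1 \<subseteq> col_span n1 ?d0" using d1 kD1 by auto
  qed
  have hc0: "hc0 = []"
  proof (rule empty_mid)
    show li: "lin_indep_list n0 (?e1 @ hc0)" by (rule lin_indep_prefix[OF li_e0])
    have "set hc0 \<subseteq> col_span n0 (?e1 @ hc0)" using col_span_self[OF lin_indep_carrier[OF li]] by auto
    thus "set hc0 \<subseteq> col_span n0 ?e1" using e0 kE0 by auto
  qed
  have hc1: "hc1 = []"
  proof (rule empty_mid)
    show li: "lin_indep_list n1 (?e0 @ hc1)" by (rule lin_indep_prefix[OF li_e1])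
    have "set hc1 \<subseteq> col_span n1 (?e0 @ hc1)" using col_span_self[OF lin_indep_carrier[OF li]] by auto
    thus "set hc1 \<subseteq> col_span n1 ?e0" using e1 kE1 by auto
  qed
  define p0 where "p0 = length xa0"
  define p1 where "p1 = length xa1"
  define q0 where "q0 = length ya0"
  define q1 where "q1 = length ya1"
  define X0 where "X0 = mat_of_cols n0 xa0"
  define X1 where "X1 = mat_of_cols n1 xa1"
  define Y0 where "Y0 = mat_of_cols n0 ya0"
  define Y1 where "Y1 = mat_of_cols n1 ya1"
  have X0: "X0 \<in> carrier_mat n0 p0" and X1: "X1 \<in> carrier_mat n1 p1"
    and Y0: "Y0 \<in> carrier_mat n0 q0" and Y1: "Y1 \<in> carrier_mat n1 q1"
    unfolding X0_def X1_def Y0_def Y1_def p0_def p1_def q0_def q1_def by auto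
  have len: "p1 + p0 = n0" "p0 + p1 = n1" "q1 + q0 = n0" "q0 + q1 = n1"
    using d0 d1 e0 e1 hb0 hb1 hc0 hc1 unfolding p0_def p1_def q0_def q1_def by auto
  have m_d1: "mat_of_cols n0 ?d1 = D1 * X1" unfolding X1_def by (rule mat_of_cols_map[OF D1], insert d0, auto)
  have m_d0: "mat_of_cols n1 ?d0 = D0 * X0" unfolding X0_def by (rule mat_of_cols_map[OF D0], insert d1, auto)
  have m_e1: "mat_of_cols n0 ?e1 = E1 * Y1" unfolding Y1_def by (rule mat_of_cols_map[OF E1], insert e0, auto)
  have m_e0: "mat_of_cols n1 ?e0 = E0 * Y0" unfolding Y0_def by (rule mat_of_cols_map[OF E0], insert e1, auto)
  have mP0: "mat_of_cols n0 (?d1 @ hb0 @ xa0) = hcat (D1 * X1) X0"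
    unfolding hb0 by (simp add: mat_of_cols_append m_d1 X0_def)
  have mP1: "mat_of_cols n1 (?d0 @ hb1 @ xa1) = hcat (D0 * X0) X1"
    unfolding hb1 by (simp add: mat_of_cols_append m_d0 X1_def)
  have mQ0: "mat_of_cols n0 (?e1 @ hc0 @ ya0) = hcat (E1 * Y1) Y0"
    unfolding hc0 by (simp add: mat_of_cols_append m_e1 Y0_def)
  have mQ1: "mat_of_cols n1 (?e0 @ hc1 @ ya1) = hcat (E0 * Y0) Y1"
    unfolding hc1 by (simp add: mat_of_cols_append m_e0 Y1_def)
  have dP0: "det (hcat (D1 * X1) X0) \<noteq> 0" using lin_indep_det[of n0 "?d1 @ hb0 @ xa0"] d0 mP0 by auto
  have dP1: "det (hcat (D0 * X0) X1) \<noteq> 0" using lin_indep_det[of n1 "?d0 @ hb1 @ xa1"] d1 mP1 by auto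
  have dQ0: "det (hcat (E1 * Y1) Y0) \<noteq> 0" using lin_indep_det[of n0 "?e1 @ hc0 @ ya0"] e0 mQ0 by auto
  have dQ1: "det (hcat (E0 * Y0) Y1) \<noteq> 0" using lin_indep_det[of n1 "?e0 @ hc1 @ ya1"] e1 mQ1 by auto
  have liE1Y1: "lin_indep_list n0 ?e1" by (rule lin_indep_prefix[OF lin_indep_prefix[OF li_e0]])
  have liE0Y0: "lin_indep_list n1 ?e0" by (rule lin_indep_prefix[OF lin_indep_prefix[OF li_e1]])
  have injE1Y1: "injm q1 (E1 * Y1)" using liE1Y1 unfolding lin_indep_injm m_e1 q1_def by auto
  have injE0Y0: "injm q0 (E0 * Y0)" using liE0Y0 unfolding lin_indep_injm m_e0 q0_def by auto
  have D1X1: "D1 * X1 \<in> carrier_mat n0 p1" using D1 X1 by auto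
  have D0X0: "D0 * X0 \<in> carrier_mat n1 p0" using D0 X0 by auto
  have E1Y1: "E1 * Y1 \<in> carrier_mat n0 q1" using E1 Y1 by auto
  have E0Y0: "E0 * Y0 \<in> carrier_mat n1 q0" using E0 Y0 by auto
  obtain H' K' where H': "H' \<in> carrier_mat p1 q1" and K': "K' \<in> carrier_mat p0 q1"
    and dec1: "E1 * Y1 = D1 * X1 * H' + X0 * K'"
    using decomp[OF D1X1 X0 len(1) dP0 E1Y1] by blast
  obtain H K where H: "H \<in> carrier_mat p0 q0" and K: "K \<in> carrier_mat p1 q0"
    and dec0: "E0 * Y0 = D0 * X0 * H + X1 * K"
    using decomp[OF D0X0 X1 len(2) dP1 E0Y0] by blast
  have XH': "X1 * H' \<in> carrier_mat n1 q1" and XK': "X0 * K' \<in> carrier_mat n0 q1"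
    and XH: "X0 * H \<in> carrier_mat n0 q0" and XK: "X1 * K \<in> carrier_mat n1 q0"
    using X0 X1 H H' K K' by auto
  have dec1': "E1 * Y1 = D1 * (X1 * H') + X0 * K'" using dec1 D1 X1 H' by simp
  have dec0': "E0 * Y0 = D0 * (X0 * H) + X1 * K" using dec0 D0 X0 H by simp
  have DE1: "D0 * (E1 * Y1) = D0 * (X0 * K')"
  proof -
    have "D0 * (E1 * Y1) = D0 * (D1 * (X1 * H')) + D0 * (X0 * K')"
      unfolding dec1' using D0 D1 XH' XK' by (subst mult_add_distrib_mat[OF D0], auto)
    also have "D0 * (D1 * (X1 * H')) = 0\<^sub>m n1 q1" by (rule zero_mult_left[OF D0 D1 dd1 XH'])
    finally show ?thesis using D0 XK' by simp
  qed
  have DE0: "D1 * (E0 * Y0) = D1 * (X1 * K)"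
  proof -
    have "D1 * (E0 * Y0) = D1 * (D0 * (X0 * H)) + D1 * (X1 * K)"
      unfolding dec0' using D0 D1 XH XK by (subst mult_add_distrib_mat[OF D1], auto)
    also have "D1 * (D0 * (X0 * H)) = 0\<^sub>m n0 q0" by (rule zero_mult_left[OF D1 D0 dd0 XH])
    finally show ?thesis using D1 XK by simp
  qed
  have injK': "injm q1 K'" unfolding injm_def
  proof (intro ballI impI)
    fix c assume c: "c \<in> carrier_vec q1" and Kc: "K' *\<^sub>v c = 0\<^sub>v (dim_row K')"
    define w where "w = (E1 * Y1) *\<^sub>v c"
    have w: "w \<in> carrier_vec n0" unfolding w_def using E1Y1 c by auto
    have "D0 *\<^sub>v w = (D0 * (E1 * Y1)) *\<^sub>v c" unfolding w_def using D0 E1Y1 c by simp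
    also have "\<dots> = D0 *\<^sub>v ((X0 * K') *\<^sub>v c)" unfolding DE1 by (rule assoc_mult_mat_vec[OF D0 XK' c])
    also have "\<dots> = D0 *\<^sub>v (X0 *\<^sub>v (K' *\<^sub>v c))" using X0 K' c by simp
    also have "\<dots> = 0\<^sub>v n1" unfolding Kc using K' D0 X0 by simp
    finally have Dw: "D0 *\<^sub>v w = 0\<^sub>v n1" .
    have "E0 *\<^sub>v w = (E0 * (E1 * Y1)) *\<^sub>v c" unfolding w_def using E0 E1Y1 c by simp
    also have "E0 * (E1 * Y1) = 0\<^sub>m n1 q1" by (rule zero_mult_left[OF E0 E1 ee1 Y1])
    finally have Ew: "E0 *\<^sub>v w = 0\<^sub>v n1" using c by simp
    have "E1 *\<^sub>v (D0 *\<^sub>v w) + D1 *\<^sub>v (E0 *\<^sub>v w) = 0\<^sub>v n0" unfolding Dw Ew using E1 D1 by simp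
    hence "w = 0\<^sub>v n0" using lA0 w by auto
    hence "(E1 * Y1) *\<^sub>v c = 0\<^sub>v (dim_row (E1 * Y1))" unfolding w_def using E1Y1 E1 by simp
    thus "c = 0\<^sub>v q1" using injE1Y1 c unfolding injm_def by auto
  qed
  have injK: "injm q0 K" unfolding injm_def
  proof (intro ballI impI)
    fix c assume c: "c \<in> carrier_vec q0" and Kc: "K *\<^sub>v c = 0\<^sub>v (dim_row K)"
    define w where "w = (E0 * Y0) *\<^sub>v c"
    have w: "w \<in> carrier_vec n1" unfolding w_def using E0Y0 c by auto
    have "D1 *\<^sub>v w = (D1 * (E0 * Y0)) *\<^sub>v c" unfolding w_def using D1 E0Y0 c by simp
    also have "\<dots> = D1 *\<^sub>v ((X1 * K) *\<^sub>v c)" unfolding DE0 by (rule assoc_mult_mat_vec[OF D1 XK c])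
    also have "\<dots> = D1 *\<^sub>v (X1 *\<^sub>v (K *\<^sub>v c))" using X1 K c by simp
    also have "\<dots> = 0\<^sub>v n0" unfolding Kc using K D1 X1 by simp
    finally have Dw: "D1 *\<^sub>v w = 0\<^sub>v n0" .
    have "E1 *\<^sub>v w = (E1 * (E0 * Y0)) *\<^sub>v c" unfolding w_def using E1 E0Y0 c by simp
    also have "E1 * (E0 * Y0) = 0\<^sub>m n0 q0" by (rule zero_mult_left[OF E1 E0 ee0 Y0])
    finally have Ew: "E1 *\<^sub>v w = 0\<^sub>v n0" using c by simp
    have "E0 *\<^sub>v (D1 *\<^sub>v w) + D0 *\<^sub>v (E1 *\<^sub>v w) = 0\<^sub>v n1" unfolding Dw Ew using E0 D0 by simp
    hence "w = 0\<^sub>v n1" using lA1 w by auto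
    hence "(E0 * Y0) *\<^sub>v c = 0\<^sub>v (dim_row (E0 * Y0))" unfolding w_def using E0Y0 E0 by simp
    thus "c = 0\<^sub>v q0" using injE0Y0 c unfolding injm_def by auto
  qed
  have le1: "q1 \<le> p0"
  proof (rule ccontr)
    assume "\<not> q1 \<le> p0"
    then obtain x where "x \<in> carrier_vec q1" "x \<noteq> 0\<^sub>v q1" "K' *\<^sub>v x = 0\<^sub>v p0" using wide_kernel[OF K'] by auto
    thus False using injK' K' unfolding injm_def by auto
  qed
  have le0: "q0 \<le> p1"
  proof (rule ccontr)
    assume "\<not> q0 \<le> p1"
    then obtain x where "x \<in> carrier_vec q0" "x \<noteq> 0\<^sub>v q0" "K *\<^sub>v x = 0\<^sub>v p1" using wide_kernel[OF K] by auto
    thus False using injK K unfolding injm_def by auto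
  qed
  have pq: "q1 = p0" "q0 = p1" using le0 le1 len by auto
  have K'sq: "K' \<in> carrier_mat p0 p0" and Ksq: "K \<in> carrier_mat p1 p1"
    and Hsq: "H \<in> carrier_mat p0 p1" and H'sq: "H' \<in> carrier_mat p1 p0"
    using K' K H H' pq by auto
  have E1Y1': "E1 * Y1 \<in> carrier_mat n0 p0" and E0Y0': "E0 * Y0 \<in> carrier_mat n1 p1"
    and Y1': "Y1 \<in> carrier_mat n1 p0" and Y0': "Y0 \<in> carrier_mat n0 p1"
    using E1Y1 E0Y0 Y1 Y0 pq by auto
  have dK': "det K' \<noteq> 0" using injK' injm_det[OF K'sq] pq by auto
  have dK: "det K \<noteq> 0" using injK injm_det[OF Ksq] pq by auto
  have Z1: "D0 * (E1 * Y1) \<in> carrier_mat n1 p0" using D0 E1Y1' by auto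
  have Z0: "D1 * (E0 * Y0) \<in> carrier_mat n0 p1" using D1 E0Y0' by auto
  obtain U W0 where U: "U \<in> carrier_mat p1 p0" and W0: "W0 \<in> carrier_mat p0 p0"
    and decQ1: "D0 * (E1 * Y1) = E0 * Y0 * U + Y1 * W0"
    using decomp[OF E0Y0' Y1' _ dQ1 Z1] len by auto
  obtain U' W1 where U': "U' \<in> carrier_mat p0 p1" and W1: "W1 \<in> carrier_mat p1 p1"
    and decQ0: "D1 * (E0 * Y0) = E1 * Y1 * U' + Y0 * W1"
    using decomp[OF E1Y1' Y0' _ dQ0 Z0] len by auto
  have rW0: "restr_det n0 (E1 * D0) (ker_mat n0 E0) = det W0"
  proof (rule restr_det_eq[OF _ liE1Y1])
    show "E1 * D0 \<in> carrier_mat n0 n0" using E1 D0 by auto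
    show "col_span n0 ?e1 = ker_mat n0 E0" using e0 kE0 by auto
    show "W0 \<in> carrier_mat (length ?e1) (length ?e1)" using W0 pq unfolding q1_def by auto
    have Y0U: "Y0 * U \<in> carrier_mat n0 p0" using Y0' U by auto
    have "E1 * D0 * (E1 * Y1) = E1 * (D0 * (E1 * Y1))" using E1 D0 E1Y1' by simp
    also have "\<dots> = E1 * (E0 * (Y0 * U)) + E1 * (Y1 * W0)" unfolding decQ1
      using E1 E0 Y0' U Y1' W0 by (subst mult_add_distrib_mat[OF E1], auto)
    also have "E1 * (E0 * (Y0 * U)) = 0\<^sub>m n0 p0" by (rule zero_mult_left[OF E1 E0 ee0 Y0U])
    finally show "E1 * D0 * mat_of_cols n0 ?e1 = mat_of_cols n0 ?e1 * W0" unfolding m_e1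
      using E1 Y1' W0 by simp
  qed
  have rW1: "restr_det n1 (E0 * D1) (ker_mat n1 E1) = det W1"
  proof (rule restr_det_eq[OF _ liE0Y0])
    show "E0 * D1 \<in> carrier_mat n1 n1" using E0 D1 by auto
    show "col_span n1 ?e0 = ker_mat n1 E1" using e1 kE1 by auto
    show "W1 \<in> carrier_mat (length ?e0) (length ?e0)" using W1 pq unfolding q0_def by auto
    have Y1U: "Y1 * U' \<in> carrier_mat n1 p1" using Y1' U' by auto
    have "E0 * D1 * (E0 * Y0) = E0 * (D1 * (E0 * Y0))" using E0 D1 E0Y0' by simp
    also have "\<dots> = E0 * (E1 * (Y1 * U')) + E0 * (Y0 * W1)" unfolding decQ0
      using E1 E0 Y1' U' Y0' W1 by (subst mult_add_distrib_mat[OF E0], auto)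
    also have "E0 * (E1 * (Y1 * U')) = 0\<^sub>m n1 p1" by (rule zero_mult_left[OF E0 E1 ee1 Y1U])
    finally show "E0 * D1 * mat_of_cols n1 ?e0 = mat_of_cols n1 ?e0 * W1" unfolding m_e0
      using E0 Y0' W1 by simp
  qed
  define Pab where "Pab = (four_block_mat (0\<^sub>m p0 p1) (1\<^sub>m p0) (1\<^sub>m p1) (0\<^sub>m p1 p0) :: 'a mat)"
  define Pba where "Pba = (four_block_mat (0\<^sub>m p1 p0) (1\<^sub>m p1) (1\<^sub>m p0) (0\<^sub>m p0 p1) :: 'a mat)"
  have Pab: "Pab \<in> carrier_mat (p0+p1) (p0+p1)" unfolding Pab_def by (auto simp: add.commute)
  have Pba: "Pba \<in> carrier_mat (p0+p1) (p0+p1)" unfolding Pba_def by (auto simp: add.commute)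
  have PabT: "transpose_mat Pab = Pba" unfolding Pab_def Pba_def
    by (subst transpose_four_block_mat, auto)
  have dPba: "det Pba = det Pab" using det_transpose[OF Pab] PabT by simp
  have "Pab * Pba = four_block_mat (0\<^sub>m p0 p1 * 0\<^sub>m p1 p0 + 1\<^sub>m p0 * 1\<^sub>m p0) (0\<^sub>m p0 p1 * 1\<^sub>m p1 + 1\<^sub>m p0 * 0\<^sub>m p0 p1)
     (1\<^sub>m p1 * 0\<^sub>m p1 p0 + 0\<^sub>m p1 p0 * 1\<^sub>m p0) (1\<^sub>m p1 * 1\<^sub>m p1 + 0\<^sub>m p1 p0 * 0\<^sub>m p0 p1)"
    unfolding Pab_def Pba_def by (rule mult_four_block_mat, auto)
  also have "\<dots> = 1\<^sub>m (p0+p1)" by simp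
  finally have "det Pab * det Pba = 1" using det_mult[OF Pab Pba] by simp
  hence dPab: "det Pab \<noteq> 0" by auto
  define R1 where "R1 = hcat (D0 * (E1 * Y1)) (E0 * Y0)"
  define R0 where "R0 = hcat (D1 * (E0 * Y0)) (E1 * Y1)"
  have R1: "R1 \<in> carrier_mat n1 n1" unfolding R1_def using hcat_carrier[OF Z1 E0Y0'] len by auto
  have R0: "R0 \<in> carrier_mat n0 n0" unfolding R0_def using hcat_carrier[OF Z0 E1Y1'] len by (auto simp: add.commute)
  have P1c: "hcat (D0 * X0) X1 \<in> carrier_mat n1 n1" using hcat_carrier[OF D0X0 X1] len by auto
  have P0c: "hcat (D1 * X1) X0 \<in> carrier_mat n0 n0" using hcat_carrier[OF D1X1 X0] len by auto
  have Q1c: "hcat (E0 * Y0) Y1 \<in> carrier_mat n1 n1" using hcat_carrier[OF E0Y0' Y1'] len by (auto simp: add.commute)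
  have Q0c: "hcat (E1 * Y1) Y0 \<in> carrier_mat n0 n0" using hcat_carrier[OF E1Y1' Y0'] len by (auto simp: add.commute)
  define T1 where "T1 = four_block_mat K' H (0\<^sub>m p1 p0) K"
  define T0 where "T0 = four_block_mat K H' (0\<^sub>m p0 p1) K'"
  define S1 where "S1 = four_block_mat (1\<^sub>m p1) U (0\<^sub>m p0 p1) W0"
  define S0 where "S0 = four_block_mat (1\<^sub>m p0) U' (0\<^sub>m p1 p0) W1"
  have T1: "T1 \<in> carrier_mat n1 n1" unfolding T1_def using K'sq Ksq len by auto
  have T0: "T0 \<in> carrier_mat n0 n0" unfolding T0_def using K'sq Ksq len by auto
  have S1: "S1 \<in> carrier_mat n1 n1" unfolding S1_def using W0 len by auto
  have S0: "S0 \<in> carrier_mat n0 n0" unfolding S0_def using W1 len by auto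
  have Pab': "Pab \<in> carrier_mat n1 n1" using Pab len by auto
  have Pba': "Pba \<in> carrier_mat n0 n0" using Pba len by (auto simp: add.commute)
  have dT1: "det T1 = det K' * det K" unfolding T1_def
    by (rule det_four_block_mat_lower_left_zero[OF K'sq Hsq _ Ksq], simp)
  have dT0: "det T0 = det K * det K'" unfolding T0_def
    by (rule det_four_block_mat_lower_left_zero[OF Ksq H'sq _ K'sq], simp)
  have dS1: "det S1 = det W0" unfolding S1_def
    using det_four_block_mat_lower_left_zero[OF one_carrier_mat U _ W0] by simp
  have dS0: "det S0 = det W1" unfolding S0_def
    using det_four_block_mat_lower_left_zero[OF one_carrier_mat U' _ W1] by simp
  have eT1: "hcat (D0 * X0) X1 * T1 = R1" unfolding T1_def R1_def
    by (subst hcat_mult[OF D0X0 X1 K'sq Hsq _ Ksq], insert D0 X0 X1 K'sq Hsq Ksq DE1 dec0', auto)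
  have eT0: "hcat (D1 * X1) X0 * T0 = R0" unfolding T0_def R0_def
    by (subst hcat_mult[OF D1X1 X0 Ksq H'sq _ K'sq], insert D1 X0 X1 K'sq H'sq Ksq DE0 dec1', auto)
  have eP1: "R1 * Pab = hcat (E0 * Y0) Y1 * S1" unfolding R1_def Pab_def S1_def
    by (subst hcat_mult[OF Z1 E0Y0'], auto, subst hcat_mult[OF E0Y0' Y1'], insert U W0 decQ1 E0 E0Y0' Y0' Y1', auto)
  have eP0: "R0 * Pba = hcat (E1 * Y1) Y0 * S0" unfolding R0_def Pba_def S0_def
    by (subst hcat_mult[OF Z0 E1Y1'], auto, subst hcat_mult[OF E1Y1' Y0'], insert U' W1 decQ0 E1 E1Y1' Y0' Y1', auto)
  have r1: "det R1 = det (hcat (D0 * X0) X1) * (det K' * det K)"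
    using det_mult[OF P1c T1] eT1 dT1 by simp
  have r0: "det R0 = det (hcat (D1 * X1) X0) * (det K * det K')"
    using det_mult[OF P0c T0] eT0 dT0 by simp
  have s1: "det R1 * det Pab = det (hcat (E0 * Y0) Y1) * det W0"
    using det_mult[OF R1 Pab'] det_mult[OF Q1c S1] eP1 dS1 by simp
  have s0: "det R0 * det Pab = det (hcat (E1 * Y1) Y0) * det W1"
    using det_mult[OF R0 Pba'] det_mult[OF Q0c S0] eP0 dS0 dPba by simp
  have sgn: "(-1::'a) ^ (p1 * p0 + p0 * p1) = 1"
  proof -
    have e: "p1 * p0 + p0 * p1 = 2 * (p0 * p1)" by simp
    have "(-1::'a) ^ (2 * (p0 * p1)) = ((-1) ^ 2) ^ (p0 * p1)" by (rule power_mult)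
    also have "\<dots> = 1" by simp
    finally show ?thesis unfolding e .
  qed
  have tor: "cm_torsion n0 n1 D0 D1 E0 E1 \<gamma>0 \<gamma>1 xa0 xa1 hb0 hb1 ya0 ya1 hc0 hc1 =
     (-1) ^ (p1 * p0 + p0 * p1) * ((\<gamma>0 / det (hcat (D1 * X1) X0) / (\<gamma>1 / det (hcat (D0 * X0) X1))) /
        (\<gamma>0 / det (hcat (E1 * Y1) Y0) / (\<gamma>1 / det (hcat (E0 * Y0) Y1))))"
    unfolding cm_torsion_def Let_def h_coeff_def mP0 mP1 mQ0 mQ1
      p0_def[symmetric] p1_def[symmetric] q0_def[symmetric] q1_def[symmetric]
    using hb0 hb1 hc0 hc1 pq by simp
  show ?thesis unfolding tor sgn rW0 rW1
  proof -
    let ?a = "det (hcat (D1 * X1) X0)" let ?b = "det (hcat (D0 * X0) X1)"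
    let ?c = "det (hcat (E1 * Y1) Y0)" let ?d = "det (hcat (E0 * Y0) Y1)"
    have w0: "det W0 = ?b * (det K' * det K) * det Pab / ?d" using s1 r1 dQ1 by (simp add: field_simps)
    have w1: "det W1 = ?a * (det K * det K') * det Pab / ?c" using s0 r0 dQ0 by (simp add: field_simps)
    show "1 * ((\<gamma>0 / ?a / (\<gamma>1 / ?b)) / (\<gamma>0 / ?c / (\<gamma>1 / ?d))) = det W0 / det W1"
      unfolding w0 w1 using dP0 dP1 dQ0 dQ1 dK dK' dPab g0 g1 by (simp add: field_simps)
  qed
qed

theorem proposition2p1:
  fixes D0 D1 E0 E1 :: "'a::field_char_0 mat" and n0 n1 :: nat
  assumes D0: "D0 \<in> carrier_mat n1 n0" and D1: "D1 \<in> carrier_mat n0 n1"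
    and E0: "E0 \<in> carrier_mat n1 n0" and E1: "E1 \<in> carrier_mat n0 n1"
    and dd0: "D1 * D0 = 0\<^sub>m n0 n0" and dd1: "D0 * D1 = 0\<^sub>m n1 n1"
    and ee0: "E1 * E0 = 0\<^sub>m n0 n0" and ee1: "E0 * E1 = 0\<^sub>m n1 n1"
    and lap: "\<not> eigenvalue (four_block_mat (E1 * D0 + D1 * E0) (0\<^sub>m n0 n1)
                                          (0\<^sub>m n1 n0) (E0 * D1 + D0 * E1)) 0"
  shows "ker_mat n0 D0 = im_mat n1 D1 \<and> ker_mat n1 D1 = im_mat n0 D0
       \<and> ker_mat n0 E0 = im_mat n1 E1 \<and> ker_mat n1 E1 = im_mat n0 E0
       \<and> bij_betw (\<lambda>v. (E1 * D0) *\<^sub>v v) (ker_mat n0 E0) (ker_mat n0 E0)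
       \<and> bij_betw (\<lambda>v. (E0 * D1) *\<^sub>v v) (ker_mat n1 E1) (ker_mat n1 E1)
       \<and> (\<forall>\<gamma>0 \<gamma>1 xa0 xa1 hb0 hb1 ya0 ya1 hc0 hc1.
            \<gamma>0 \<noteq> 0 \<longrightarrow> \<gamma>1 \<noteq> 0 \<longrightarrow>
            cm_data n0 n1 D0 D1 E0 E1 xa0 xa1 hb0 hb1 ya0 ya1 hc0 hc1 \<longrightarrow>
            cm_torsion n0 n1 D0 D1 E0 E1 \<gamma>0 \<gamma>1 xa0 xa1 hb0 hb1 ya0 ya1 hc0 hc1
              = restr_det n0 (E1 * D0) (ker_mat n0 E0) / restr_det n1 (E0 * D1) (ker_mat n1 E1))"
proof -
  have L0: "E1 * D0 + D1 * E0 \<in> carrier_mat n0 n0" using D0 D1 E0 E1 by auto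
  have L1: "E0 * D1 + D0 * E1 \<in> carrier_mat n1 n1" using D0 D1 E0 E1 by auto
  note i0 = lap_inj(1)[OF L0 L1 lap] and i1 = lap_inj(2)[OF L0 L1 lap]
  have L0x: "(E1 * D0 + D1 * E0) *\<^sub>v x = E1 *\<^sub>v (D0 *\<^sub>v x) + D1 *\<^sub>v (E0 *\<^sub>v x)" if x: "x \<in> carrier_vec n0" for x
    using D0 D1 E0 E1 x by (subst add_mult_distrib_mat_vec[of _ n0 n0], auto)
  have L1x: "(E0 * D1 + D0 * E1) *\<^sub>v x = E0 *\<^sub>v (D1 *\<^sub>v x) + D0 *\<^sub>v (E1 *\<^sub>v x)" if x: "x \<in> carrier_vec n1" for x
    using D0 D1 E0 E1 x by (subst add_mult_distrib_mat_vec[of _ n1 n1], auto)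
  have lA0: "\<forall>x\<in>carrier_vec n0. E1 *\<^sub>v (D0 *\<^sub>v x) + D1 *\<^sub>v (E0 *\<^sub>v x) = 0\<^sub>v n0 \<longrightarrow> x = 0\<^sub>v n0"
    using i0 L0x by auto
  have lA1: "\<forall>x\<in>carrier_vec n1. E0 *\<^sub>v (D1 *\<^sub>v x) + D0 *\<^sub>v (E1 *\<^sub>v x) = 0\<^sub>v n1 \<longrightarrow> x = 0\<^sub>v n1"
    using i1 L1x by auto
  have lB0: "\<forall>x\<in>carrier_vec n0. D1 *\<^sub>v (E0 *\<^sub>v x) + E1 *\<^sub>v (D0 *\<^sub>v x) = 0\<^sub>v n0 \<longrightarrow> x = 0\<^sub>v n0"
  proof (intro ballI impI)
    fix x assume x: "x \<in> carrier_vec n0" and h: "D1 *\<^sub>v (E0 *\<^sub>v x) + E1 *\<^sub>v (D0 *\<^sub>v x) = 0\<^sub>v n0"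
    have "E1 *\<^sub>v (D0 *\<^sub>v x) + D1 *\<^sub>v (E0 *\<^sub>v x) = D1 *\<^sub>v (E0 *\<^sub>v x) + E1 *\<^sub>v (D0 *\<^sub>v x)"
      by (rule comm_add_vec[of _ n0], insert D0 D1 E0 E1 x, auto)
    thus "x = 0\<^sub>v n0" using lA0 x h by auto
  qed
  have lB1: "\<forall>x\<in>carrier_vec n1. D0 *\<^sub>v (E1 *\<^sub>v x) + E0 *\<^sub>v (D1 *\<^sub>v x) = 0\<^sub>v n1 \<longrightarrow> x = 0\<^sub>v n1"
  proof (intro ballI impI)
    fix x assume x: "x \<in> carrier_vec n1" and h: "D0 *\<^sub>v (E1 *\<^sub>v x) + E0 *\<^sub>v (D1 *\<^sub>v x) = 0\<^sub>v n1"
    have "E0 *\<^sub>v (D1 *\<^sub>v x) + D0 *\<^sub>v (E1 *\<^sub>v x) = D0 *\<^sub>v (E1 *\<^sub>v x) + E0 *\<^sub>v (D1 *\<^sub>v x)"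
      by (rule comm_add_vec[of _ n1], insert D0 D1 E0 E1 x, auto)
    thus "x = 0\<^sub>v n1" using lA1 x h by auto
  qed
  have kD0: "ker_mat n0 D0 = im_mat n1 D1" by (rule ker_eq_im[OF D0 D1 E0 E1 dd1 lA0 lA1 dd0])
  have kD1: "ker_mat n1 D1 = im_mat n0 D0" by (rule ker_eq_im[OF D1 D0 E1 E0 dd0 lA1 lA0 dd1])
  have kE0: "ker_mat n0 E0 = im_mat n1 E1" by (rule ker_eq_im[OF E0 E1 D0 D1 ee1 lB0 lB1 ee0])
  have kE1: "ker_mat n1 E1 = im_mat n0 E0" by (rule ker_eq_im[OF E1 E0 D1 D0 ee0 lB1 lB0 ee1])
  have b0: "bij_betw (\<lambda>v. (E1 * D0) *\<^sub>v v) (ker_mat n0 E0) (ker_mat n0 E0)"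
    by (rule bij_part[OF E0 E1 D0 D1 ee1 lB0 lB1 ee0])
  have b1: "bij_betw (\<lambda>v. (E0 * D1) *\<^sub>v v) (ker_mat n1 E1) (ker_mat n1 E1)"
    by (rule bij_part[OF E1 E0 D1 D0 ee0 lB1 lB0 ee1])
  show ?thesis
    using kD0 kD1 kE0 kE1 b0 b1
      torsion_core[OF D0 D1 E0 E1 dd0 dd1 ee0 ee1 lA0 lA1 kD0 kD1 kE0 kE1] by blast
qed

end
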